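(* Let $a>2$ and $f_a(z)=z\big(z^2+(a-2)z+1-2a\big)$. Let $z_0$ be chosen uniformly at random from $[-a,2]$ and $z_{t+1}=f_a(z_t)$. Then $\lim_{t\to\infty}|z_t|=+\infty$ almost surely. *)

theory Defs
  imports "HOL-Probability.Probability"
begin

definition f :: "real \<Rightarrow> real \<Rightarrow> real" where
  "f a z = z * (z^2 + (a - 2) * z + 1 - 2 * a)"

end

theory Submission
  imports Defs
begin


lemma expand_gen:
  fixes h h' :: "real \<Rightarrow> real"
  assumes xy: "x \<le> y" and s: "s > 0" and l: "l \<ge> 0"
  and cont: "continuous_on {x..y} h"
  and bx: "\<bar>x\<bar> \<le> s" and byy: "\<bar>y\<bar> \<le> s" and bhx: "\<bar>h x\<bar> \<le> s" and bhy: "\<bar>h y\<bar> \<le> s"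
  and der: "\<And>v. x < v \<Longrightarrow> v < y \<Longrightarrow> (h has_real_derivative h' v) (at v) \<and> \<bar>h v\<bar> < s \<and> \<bar>v\<bar> < s \<and> h' v > 0
     \<and> l^2 * (s^2 - (h v)^2) \<le> (h' v)^2 * (s^2 - v^2)"
  shows "l * (arccos (x/s) - arccos (y/s)) \<le> arccos (h x / s) - arccos (h y / s)"
proof -
  define \<phi> where "\<phi> u = arccos (h u / s) - l * arccos (u / s)" for u
  have "\<phi> x \<ge> \<phi> y"
  proof (rule DERIV_nonpos_imp_decreasing_open[OF xy])
    fix v assume v: "x < v" "v < y"
    note d = der[OF v]
    have hv: "-1 < h v / s" "h v / s < 1" using d s by (auto simp: abs_less_iff field_simps)
    have vv: "-1 < v / s" "v / s < 1" using d s by (auto simp: abs_less_iff field_simps)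
    define A where "A = sqrt (1 - (v/s)^2)"
    define B where "B = sqrt (1 - (h v/s)^2)"
    have A0: "A > 0" unfolding A_def using vv by (simp add: abs_square_less_1 abs_less_iff)
    have B0: "B > 0" unfolding B_def using hv by (simp add: abs_square_less_1 abs_less_iff)
    have D: "(\<phi> has_real_derivative (inverse (- B) * (h' v / s) - l * (inverse (- A) * (1 / s)))) (at v)"
    proof -
      have d1: "((\<lambda>u. h u / s) has_real_derivative h' v / s) (at v)"
        using d by (intro DERIV_cdivide) auto
      have d2: "((\<lambda>u. u / s) has_real_derivative 1 / s) (at v)"
        by (intro DERIV_cdivide DERIV_ident)
      have e1: "((\<lambda>u. arccos (h u / s)) has_real_derivative inverse (- B) * (h' v / s)) (at v)"
        unfolding B_def using DERIV_chain2[OF DERIV_arccos[OF hv] d1] .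
      have e2: "((\<lambda>u. arccos (u / s)) has_real_derivative inverse (- A) * (1 / s)) (at v)"
        unfolding A_def using DERIV_chain2[OF DERIV_arccos[OF vv] d2] .
      show ?thesis unfolding \<phi>_def by (intro DERIV_diff e1 DERIV_cmult e2)
    qed
    have sq: "(l * B)^2 \<le> (h' v * A)^2"
    proof -
      have "(v/s)^2 < 1" "(h v/s)^2 < 1" using vv hv by (simp_all add: abs_square_less_1 abs_less_iff)
      then have A2: "A^2 = 1 - (v/s)^2" and B2: "B^2 = 1 - (h v/s)^2" unfolding A_def B_def
        by (simp_all add: real_sqrt_pow2)
      have "(l*B)^2 = l^2 * (1 - (h v/s)^2)" using B2 by (simp add: power_mult_distrib)
      also have "\<dots> = l^2 * (s^2 - (h v)^2) / s^2" using s by (simp add: field_simps)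
      also have "\<dots> \<le> (h' v)^2 * (s^2 - v^2) / s^2" using d s by (simp add: divide_right_mono)
      also have "\<dots> = (h' v * A)^2"
      proof -
        have e: "s^2 - v^2 = A^2 * s^2" using A2 s by (simp add: field_simps)
        show ?thesis unfolding e using s by (simp add: power_mult_distrib)
      qed
      finally show ?thesis .
    qed
    have "l * B \<le> h' v * A"
      using power2_le_imp_le[OF sq] d A0 by (simp add: less_imp_le)
    then have "l / A \<le> h' v / B" using A0 B0 by (simp add: field_simps)
    then have "inverse (- B) * (h' v / s) - l * (inverse (- A) * (1 / s)) \<le> 0"
    proof -
      have "l / A / s \<le> h' v / B / s" using divide_right_mono[OF \<open>l / A \<le> h' v / B\<close> less_imp_le[OF s]] .
      then show ?thesis by (simp add: field_simps)
    qed
    with D show "\<exists>y. (\<phi> has_real_derivative y) (at v) \<and> y \<le> 0" by blast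
  next
    have hb: "\<forall>u\<in>{x..y}. \<bar>h u\<bar> \<le> s"
    proof
      fix u assume "u \<in> {x..y}"
      then consider "u = x" | "u = y" | "x < u \<and> u < y" by fastforce
      then show "\<bar>h u\<bar> \<le> s" using bhx bhy der by cases (auto intro: less_imp_le)
    qed
    have ub: "\<forall>u\<in>{x..y}. \<bar>u\<bar> \<le> s" using bx byy by auto
    show "continuous_on {x..y} \<phi>" unfolding \<phi>_def
      apply (intro continuous_intros cont)
      using hb ub s by (auto simp: abs_le_iff field_simps)
  qed
  then show ?thesis unfolding \<phi>_def by (simp add: algebra_simps)
qed



definition Gc :: "real \<Rightarrow> real \<Rightarrow> real" where "Gc s u = u * (u^2 - s^2 + 1)"
definition Lam :: "real \<Rightarrow> real" where "Lam s = sqrt (9 + (s^2 - 4) * (s^2 + 2) / (2 * s^2 + 1))"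

lemma G_deriv: "(Gc s has_real_derivative (3*u^2 - s^2 + 1)) (at u)"
  unfolding Gc_def by (rule derivative_eq_intros refl | simp add: power2_eq_square algebra_simps)+

lemma G_cont: "continuous_on A (Gc s)"
  unfolding Gc_def by (intro continuous_intros)

lemma G_odd: "Gc s (-u) = - Gc s u" unfolding Gc_def by (simp add: algebra_simps)

lemma G_ident: "s^2 - (Gc s u)^2 = (s^2 - u^2) * (u^4 - (s^2-2)*u^2 + 1)"
  unfolding Gc_def by (simp add: power2_eq_square power4_eq_xxxx algebra_simps)

lemma G_plus: "Gc s u + s = (u + s) * (u^2 - s*u + 1)"
  unfolding Gc_def by (simp add: power2_eq_square algebra_simps)
lemma G_minus: "s - Gc s u = (s - u) * (u^2 + s*u + 1)"
  unfolding Gc_def by (simp add: power2_eq_square algebra_simps)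

lemma Lam_gt3: "s > 2 \<Longrightarrow> Lam s > 3"
proof -
  assume s: "s > 2"
  have "s^2 > 4" using s mult_strict_mono[of 2 s 2 s] by (simp add: power2_eq_square)
  then have "(s^2-4)*(s^2+2)/ (2 * s^2 + 1) > 0" by (intro divide_pos_pos mult_pos_pos) auto
  then have "9 < 9 + (s^2-4)*(s^2+2)/ (2 * s^2 + 1)" by simp
  then have "sqrt 9 < Lam s" unfolding Lam_def by (simp only: real_sqrt_less_iff)
  then show ?thesis by simp
qed

lemma Lam_key:
  assumes s: "s > 2" and u: "u^2 \<le> s^2" and D: "u^4 - (s^2-2)*u^2 + 1 \<ge> 0"
  shows "(Lam s)^2 * (u^4 - (s^2-2)*u^2 + 1) \<le> (3*u^2 - s^2 + 1)^2"
proof -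
  define D where "D = u^4 - (s^2-2)*u^2 + 1"
  have s4: "s^2 > 4" using s mult_strict_mono[of 2 s 2 s] by (simp add: power2_eq_square)
  have L2: "(Lam s)^2 = 9 + (s^2-4)*(s^2+2)/ (2 * s^2 + 1)" unfolding Lam_def
    using s4 by (intro real_sqrt_pow2) (simp add: add_nonneg_nonneg)
  have Dle: "D \<le> 2 * s^2 + 1"
  proof -
    have "D - (2 * s^2 + 1) = (u^2 - s^2) * (u^2 + 2)" unfolding D_def by (simp add: power4_eq_xxxx power2_eq_square algebra_simps)
    also have "\<dots> \<le> 0" using u by (intro mult_nonpos_nonneg) auto
    finally show ?thesis by simp
  qed
  have id: "(3*u^2 - s^2 + 1)^2 = 9*D + (s^2-4)*(3*u^2+s^2+2)" unfolding D_def
    by (simp add: power4_eq_xxxx power2_eq_square algebra_simps)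
  have "(s^2-4)*(s^2+2)/ (2 * s^2 + 1) * D \<le> (s^2-4)*(s^2+2)"
  proof -
    have "D / (2 * s^2 + 1) \<le> 1" proof -
      have p: "2 * s^2 + 1 > (0::real)" by (simp add: add_pos_nonneg add_nonneg_pos)
      show ?thesis using Dle by (simp add: pos_divide_le_eq[OF p])
    qed
    then have "(s^2-4)*(s^2+2) * (D / (2 * s^2 + 1)) \<le> (s^2-4)*(s^2+2) * 1"
      using s4 by (intro mult_left_mono) auto
    then show ?thesis by simp
  qed
  also have "\<dots> \<le> (s^2-4)*(3*u^2+s^2+2)" using s4 by (intro mult_left_mono) auto
  finally show ?thesis unfolding L2 id D_def[symmetric] by (simp add: algebra_simps)
qed



definition P :: "real \<Rightarrow> nat \<Rightarrow> real set" where
  "P s i = {u. \<bar>u\<bar> \<le> s \<and> \<bar>Gc s u\<bar> \<le> s \<and>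
     (if i = 0 then u \<le> -1 else if i = 1 then -1 \<le> u \<and> u \<le> 1 else 1 \<le> u)}"

lemma s4: "s > 2 \<Longrightarrow> s^2 > (4::real)"
  using mult_strict_mono[of 2 s 2 s] by (simp add: power2_eq_square)

lemma key_ineq:
  assumes s: "s > 2" and v: "\<bar>v\<bar> < s" and g: "\<bar>Gc s v\<bar> < s"
  shows "(Lam s)^2 * (s^2 - (Gc s v)^2) \<le> (3* v^2 - s^2 + 1)^2 * (s^2 - v^2)"
proof -
  have a: "s^2 - v^2 > 0" using v s by (simp add: abs_less_iff power2_eq_square) (smt (verit) mult_strict_mono mult_minus_left mult_minus_right)
  have b: "s^2 - (Gc s v)^2 > 0" using g s by (simp add: abs_less_iff power2_eq_square) (smt (verit) mult_strict_mono mult_minus_left mult_minus_right)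
  have D: "v^4 - (s^2-2)* v^2 + 1 > 0" using a b unfolding G_ident by (simp add: zero_less_mult_iff)
  have v2: "v^2 \<le> s^2" using a by simp
  have "(Lam s)^2 * (v^4 - (s^2-2)* v^2 + 1) * (s^2 - v^2) \<le> (3* v^2 - s^2 + 1)^2 * (s^2 - v^2)"
    using Lam_key[OF s v2 less_imp_le[OF D]] a by (intro mult_right_mono) auto
  then show ?thesis unfolding G_ident by (simp add: algebra_simps)
qed

lemma exp_P2:
  assumes s: "s > 2" and xy: "x \<le> y" and x: "x \<in> P s 2" and y: "y \<in> P s 2"
  shows "Lam s * (arccos (x/s) - arccos (y/s)) \<le> arccos (Gc s x / s) - arccos (Gc s y / s)"
proof (rule expand_gen[where h' = "\<lambda>v. 3* v^2 - s^2 + 1"])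
  have x1: "1 \<le> x" "\<bar>x\<bar> \<le> s" "\<bar>Gc s x\<bar> \<le> s" using x by (auto simp: P_def)
  have "(x + s) * (x^2 - s*x + 1) \<ge> 0" using x1 G_plus[of s x] by linarith
  then have gx: "x^2 - s*x + 1 \<ge> 0" using x1 s by (simp add: zero_le_mult_iff)
  have xs1: "x > s - 1"
  proof (rule ccontr)
    assume "\<not> x > s - 1"
    then have "(x-1)*(s-1-x) \<ge> 0" using x1 by simp
    moreover have "x^2 - s*x + 1 = -((x-1)*(s-1-x)) - s + 2" by (simp add: power2_eq_square algebra_simps)
    ultimately show False using gx s by linarith
  qed
  fix v assume v: "x < v" "v < y"
  have ys: "y \<le> s" using y by (auto simp: P_def)
  have "v^2 - s* v + 1 - (x^2 - s*x + 1) = (v - x) * (v + x - s)" by (simp add: power2_eq_square algebra_simps)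
  moreover have "(v - x) * (v + x - s) > 0" using v xs1 s by (intro mult_pos_pos) auto
  ultimately have gv: "v^2 - s* v + 1 > 0" using gx by linarith
  have vp: "v^2 + s* v + 1 > 0" using v x1 s by (simp add: add_pos_pos)
  have c1: "Gc s v + s > 0" unfolding G_plus using gv v x1 s by (intro mult_pos_pos) auto
  have c2: "s - Gc s v > 0" unfolding G_minus using vp v ys by (intro mult_pos_pos) auto
  have ga: "\<bar>Gc s v\<bar> < s" using c1 c2 by auto
  have va: "\<bar>v\<bar> < s" using v ys x1 by auto
  have hp: "3* v^2 - s^2 + 1 > 0"
  proof -
    have "v^2 > (s-1)^2" using v xs1 s by (intro power_strict_mono) auto
    moreover have "3*(s-1)^2 - (s^2 - 1) = 2*(s-1)*(s-2)" by (simp add: power2_eq_square algebra_simps)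
    moreover have "2*(s-1)*(s-2) > 0" using s by simp
    ultimately show ?thesis by linarith
  qed
  show "(Gc s has_real_derivative 3* v^2 - s^2 + 1) (at v) \<and> \<bar>Gc s v\<bar> < s \<and> \<bar>v\<bar> < s \<and> 3* v^2 - s^2 + 1 > 0
     \<and> (Lam s)^2 * (s^2 - (Gc s v)^2) \<le> (3* v^2 - s^2 + 1)^2 * (s^2 - v^2)"
    using G_deriv ga va hp key_ineq[OF s va ga] by auto
qed (use assms Lam_gt3[OF s] in \<open>auto simp: P_def G_cont\<close>)



lemma exp_P1:
  assumes s: "s > 2" and xy: "x \<le> y" and x: "x \<in> P s 1" and y: "y \<in> P s 1"
  shows "Lam s * (arccos (x/s) - arccos (y/s)) \<le> arccos (Gc s y / s) - arccos (Gc s x / s)"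
proof -
  have x1: "-1 \<le> x" "x \<le> 1" "\<bar>Gc s x\<bar> \<le> s" "\<bar>x\<bar> \<le> s" using x by (auto simp: P_def)
  have y1: "-1 \<le> y" "y \<le> 1" "\<bar>Gc s y\<bar> \<le> s" "\<bar>y\<bar> \<le> s" using y by (auto simp: P_def)
  have S4: "s^2 > 4" using s4[OF s] .
  have dec: "Gc s w < Gc s v" if "-1 \<le> v" "v < w" "w \<le> 1" for v w
  proof -
    have eq: "Gc s w - Gc s v = (w - v) * (w^2 + w * v + v^2 - s^2 + 1)"
      unfolding Gc_def by (simp add: power2_eq_square algebra_simps)
    have "w^2 + w * v + v^2 \<le> 3"
    proof -
      have "w^2 \<le> 1" "v^2 \<le> 1" using that by (auto simp: abs_square_le_1 abs_le_iff)
      moreover have "w * v \<le> 1" using that by (smt (verit) mult_le_one mult_minus_left mult_minus_right mult_nonneg_nonneg mult_nonpos_nonpos mult_le_cancel_left1)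
      ultimately show ?thesis by linarith
    qed
    have "(w - v) * (w^2 + w * v + v^2 - s^2 + 1) < 0"
      using that S4 \<open>w^2 + w * v + v^2 \<le> 3\<close> by (intro mult_pos_neg) auto
    then show ?thesis using eq by simp
  qed
  have "Lam s * (arccos (x/s) - arccos (y/s)) \<le> arccos ((\<lambda>u. - Gc s u) x / s) - arccos ((\<lambda>u. - Gc s u) y / s)"
  proof (rule expand_gen[where h' = "\<lambda>v. - (3 * v^2 - s^2 + 1)"])
    fix v assume v: "x < v" "v < y"
    have ga: "\<bar>Gc s v\<bar> < s" using dec[of x v] dec[of v y] v x1 y1 by auto
    have va: "\<bar>v\<bar> < s" using v x1 y1 s by auto
    have "v^2 \<le> 1" using v x1 y1 by (auto simp: abs_square_le_1 abs_le_iff)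
    then have hp: "- (3 * v^2 - s^2 + 1) > 0" using S4 by linarith
    show "((\<lambda>u. - Gc s u) has_real_derivative - (3 * v^2 - s^2 + 1)) (at v) \<and> \<bar>- Gc s v\<bar> < s \<and> \<bar>v\<bar> < s \<and> - (3 * v^2 - s^2 + 1) > 0
     \<and> (Lam s)^2 * (s^2 - (- Gc s v)^2) \<le> (- (3 * v^2 - s^2 + 1))^2 * (s^2 - v^2)"
    proof -
      have sq: "(- (3 * v^2 - s^2 + 1))^2 = (3 * v^2 - s^2 + 1)^2" by (simp only: power2_minus)
      show ?thesis unfolding sq using DERIV_minus[OF G_deriv] ga va hp key_ineq[OF s va ga] by auto
    qed
  qed (use assms x1 y1 Lam_gt3[OF s] in \<open>auto intro: continuous_intros G_cont\<close>)
  moreover have "arccos (- Gc s x / s) = pi - arccos (Gc s x / s)" "arccos (- Gc s y / s) = pi - arccos (Gc s y / s)"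
    using arccos_minus[of "Gc s x / s"] arccos_minus[of "Gc s y / s"] x1 y1 s
    by (auto simp: abs_le_iff field_simps)
  ultimately show ?thesis by simp
qed

lemma P_neg: "u \<in> P s 0 \<Longrightarrow> - u \<in> P s 2"
  by (auto simp: P_def G_odd)

lemma exp_P0:
  assumes s: "s > 2" and xy: "x \<le> y" and x: "x \<in> P s 0" and y: "y \<in> P s 0"
  shows "Lam s * (arccos (x/s) - arccos (y/s)) \<le> arccos (Gc s x / s) - arccos (Gc s y / s)"
proof -
  have x1: "\<bar>Gc s x\<bar> \<le> s" "\<bar>x\<bar> \<le> s" using x by (auto simp: P_def)
  have y1: "\<bar>Gc s y\<bar> \<le> s" "\<bar>y\<bar> \<le> s" using y by (auto simp: P_def)
  have m: "arccos (- w / s) = pi - arccos (w / s)" if "\<bar>w\<bar> \<le> s" for w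
    using arccos_minus[of "w / s"] that s by (auto simp: abs_le_iff field_simps)
  have "Lam s * (arccos (-y/s) - arccos (-x/s)) \<le> arccos (Gc s (-y) / s) - arccos (Gc s (-x) / s)"
    using exp_P2[OF s _ P_neg[OF y] P_neg[OF x]] xy by simp
  then show ?thesis unfolding G_odd using m x1 y1 by simp
qed

lemma expand_P:
  assumes s: "s > 2" and i: "i < 3" and x: "x \<in> P s i" and y: "y \<in> P s i"
  shows "Lam s * \<bar>arccos (x/s) - arccos (y/s)\<bar> \<le> \<bar>arccos (Gc s x / s) - arccos (Gc s y / s)\<bar>"
proof -
  have gen: "Lam s * \<bar>arccos (x/s) - arccos (y/s)\<bar> \<le> \<bar>arccos (Gc s x / s) - arccos (Gc s y / s)\<bar>"
    if xy: "x \<le> y" and x: "x \<in> P s i" and y: "y \<in> P s i" for x y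
  proof -
    have b: "-1 \<le> x/s" "x/s \<le> y/s" "y/s \<le> 1" using x y xy s by (auto simp: P_def abs_le_iff field_simps)
    have "arccos (y/s) \<le> arccos (x/s)" using arccos_le_arccos[OF b] .
    then have e: "\<bar>arccos (x/s) - arccos (y/s)\<bar> = arccos (x/s) - arccos (y/s)" by simp
    have "i = 0 \<or> i = 1 \<or> i = 2" using i by auto
    then show ?thesis unfolding e
      using exp_P0[OF s xy] exp_P1[OF s xy] exp_P2[OF s xy] x y by auto
  qed
  show ?thesis
  proof (cases "x \<le> y")
    case True then show ?thesis using gen x y by blast
  next
    case False then show ?thesis using gen[of y x] x y by (simp add: abs_minus_commute)
  qed
qed



definition U :: "real \<Rightarrow> nat \<Rightarrow> real set" where
  "U s n = {u. \<forall>t \<le> n. \<bar>(Gc s ^^ t) u\<bar> \<le> s}"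

lemma cover:
  assumes s: "s > 2"
  shows "\<exists>F. finite F \<and> card F \<le> 3^n \<and> U s n \<subseteq> \<Union>F \<and>
    (\<forall>C\<in>F. C \<subseteq> {-s..s} \<and> (\<forall>x\<in>C. \<forall>y\<in>C. \<bar>arccos (x/s) - arccos (y/s)\<bar> \<le> pi / Lam s ^ n))"
proof (induction n)
  case 0
  have "\<bar>arccos (x/s) - arccos (y/s)\<bar> \<le> pi" if "x \<in> {-s..s}" "y \<in> {-s..s}" for x y
  proof -
    have "-1 \<le> x/s" "x/s \<le> 1" "-1 \<le> y/s" "y/s \<le> 1" using that s by (auto simp: field_simps)
    then show ?thesis using arccos_bounded[of "x/s"] arccos_bounded[of "y/s"] by linarith
  qed
  note that = this
  moreover have "U s 0 \<subseteq> {-s..s}" by (auto simp: U_def abs_le_iff)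
  ultimately show ?case
    apply (intro exI[of _ "{{-s..s}}"] conjI)
    subgoal by simp
    subgoal by simp
    subgoal by simp
    subgoal
    proof (rule ballI)
      fix C assume "C \<in> {{-s..s}}"
      then have C: "C = {-s..s}" by simp
      show "C \<subseteq> {-s..s} \<and> (\<forall>x\<in>C. \<forall>y\<in>C. \<bar>arccos (x/s) - arccos (y/s)\<bar> \<le> pi / Lam s ^ 0)"
        unfolding C power_0 div_by_1
      proof (intro conjI ballI subset_refl)
        fix x y assume "x \<in> {-s..s}" "y \<in> {-s..s}"
        then show "\<bar>arccos (x/s) - arccos (y/s)\<bar> \<le> pi" by (rule that)
      qed
    qed
    done
next
  case (Suc n)
  from Suc.IH obtain F where F0: "finite F \<and> card F \<le> 3^n \<and> U s n \<subseteq> \<Union>F \<and>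
    (\<forall>C\<in>F. C \<subseteq> {-s..s} \<and> (\<forall>x\<in>C. \<forall>y\<in>C. \<bar>arccos (x/s) - arccos (y/s)\<bar> \<le> pi / Lam s ^ n))"
    by (rule exE)
  have F: "finite F" "card F \<le> 3^n" "U s n \<subseteq> \<Union>F"
    "\<And>C. C\<in>F \<Longrightarrow> C \<subseteq> {-s..s}"
    "\<And>C x y. C\<in>F \<Longrightarrow> x\<in>C \<Longrightarrow> y\<in>C \<Longrightarrow> \<bar>arccos (x/s) - arccos (y/s)\<bar> \<le> pi / Lam s ^ n"
    using F0 by (simp_all del: atLeastAtMost_iff)
  define F' where "F' = (\<lambda>(i,C). P s i \<inter> Gc s -` C) ` ({0,1,2::nat} \<times> F)"
  have L3: "Lam s > 3" using Lam_gt3[OF s] .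
  have "finite F'" unfolding F'_def using F(1) by auto
  moreover have "card F' \<le> 3^Suc n"
  proof -
    have "card F' \<le> card ({0,1,2::nat} \<times> F)" unfolding F'_def by (intro card_image_le) (use F(1) in auto)
    also have "\<dots> = 3 * card F" using F(1) by (simp add: card_cartesian_product)
    also have "\<dots> \<le> 3^Suc n" using F(2) by simp
    finally show ?thesis .
  qed
  moreover have "U s (Suc n) \<subseteq> \<Union>F'"
  proof
    fix u assume u: "u \<in> U s (Suc n)"
    have u0: "\<bar>u\<bar> \<le> s" using u[unfolded U_def, simplified, rule_format, of 0] by simp
    have u1: "\<bar>Gc s u\<bar> \<le> s" using u[unfolded U_def, simplified, rule_format, of 1] by simp
    have "Gc s u \<in> U s n"
    proof -
      have "(Gc s ^^ t) (Gc s u) = (Gc s ^^ Suc t) u" for t by (simp add: funpow_Suc_right del: funpow.simps)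
      then show ?thesis using u unfolding U_def by auto
    qed
    then obtain C where C: "C \<in> F" "Gc s u \<in> C" using F(3) by blast
    obtain i where i: "i \<in> {0,1,2::nat}" "u \<in> P s i"
    proof (cases "u \<le> -1")
      case True then show ?thesis using that[of 0] u0 u1 by (auto simp: P_def)
    next
      case False
      show ?thesis
      proof (cases "u \<le> 1")
        case True then show ?thesis using that[of 1] u0 u1 False by (auto simp: P_def)
      next
        case False2: False
        then show ?thesis using that[of 2] u0 u1 by (auto simp: P_def)
      qed
    qed
    then show "u \<in> \<Union>F'" unfolding F'_def using C by blast
  qed
  moreover have "\<forall>C'\<in>F'. C' \<subseteq> {-s..s} \<and> (\<forall>x\<in>C'. \<forall>y\<in>C'. \<bar>arccos (x/s) - arccos (y/s)\<bar> \<le> pi / Lam s ^ Suc n)"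
  proof
    fix C' assume "C' \<in> F'"
    then obtain i C where iC: "i \<in> {0,1,2::nat}" "C \<in> F" "C' = P s i \<inter> Gc s -` C" unfolding F'_def by auto
    have "C' \<subseteq> {-s..s}" using iC by (auto simp: P_def abs_le_iff)
    moreover have "\<bar>arccos (x/s) - arccos (y/s)\<bar> \<le> pi / Lam s ^ Suc n" if "x \<in> C'" "y \<in> C'" for x y
    proof -
      have "Lam s * \<bar>arccos (x/s) - arccos (y/s)\<bar> \<le> \<bar>arccos (Gc s x / s) - arccos (Gc s y / s)\<bar>"
        using expand_P[OF s, of i x y] iC that by auto
      also have "\<dots> \<le> pi / Lam s ^ n" using F(5)[of C "Gc s x" "Gc s y"] iC that by auto
      finally have "Lam s * \<bar>arccos (x/s) - arccos (y/s)\<bar> \<le> pi / Lam s ^ n" .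
      then show ?thesis using L3 by (simp add: field_simps)
    qed
    ultimately show "C' \<subseteq> {-s..s} \<and> (\<forall>x\<in>C'. \<forall>y\<in>C'. \<bar>arccos (x/s) - arccos (y/s)\<bar> \<le> pi / Lam s ^ Suc n)" by blast
  qed
  ultimately show ?case by blast
qed



lemma f_plus: "f a w + a = (w + a) * (w - 1)^2"
  unfolding f_def by (simp add: power2_eq_square algebra_simps)

lemma orbit:
  assumes z: "z \<ge> -a" and s2: "s^2 = a + 2"
  shows "(f a ^^ t) z + a = ((Gc s ^^ t) (sqrt (z + a)))^2"
proof (induction t)
  case 0
  then show ?case using z by simp
next
  case (Suc t)
  define w where "w = (f a ^^ t) z"
  define v where "v = (Gc s ^^ t) (sqrt (z + a))"
  have w: "w = v^2 - a" using Suc unfolding w_def v_def by simp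
  have "(f a ^^ Suc t) z + a = (w + a) * (w - 1)^2" unfolding w_def by (simp add: f_plus)
  also have "\<dots> = (Gc s v)^2" unfolding w Gc_def s2 by (simp add: power2_eq_square algebra_simps)
  finally show ?case unfolding v_def by simp
qed

lemma escape_grow:
  assumes s: "s > 2" and v0: "\<bar>v0\<bar> > s"
  shows "\<bar>(Gc s ^^ m) v0\<bar> \<ge> \<bar>v0\<bar> * (v0^2 - s^2 + 1)^m"
proof (induction m)
  case 0 then show ?case by simp
next
  case (Suc m)
  define k where "k = v0^2 - s^2 + 1"
  define v where "v = (Gc s ^^ m) v0"
  have v0s: "v0^2 > s^2" using v0 s by (simp add: abs_less_iff power2_eq_square) (smt (verit) mult_strict_mono mult_minus_left mult_minus_right)
  then have k1: "k > 1" unfolding k_def by simp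
  have kp: "k^m \<ge> 1" using k1 by simp
  have "\<bar>v\<bar> \<ge> \<bar>v0\<bar> * k^m" using Suc unfolding v_def k_def .
  moreover have "\<bar>v0\<bar> * k^m \<ge> \<bar>v0\<bar>" using mult_left_mono[OF kp, of "\<bar>v0\<bar>"] by simp
  ultimately have vv: "\<bar>v\<bar> \<ge> \<bar>v0\<bar>" by linarith
  have "v^2 \<ge> v0^2" using vv by (simp add: abs_le_square_iff)
  then have kv: "v^2 - s^2 + 1 \<ge> k" unfolding k_def by simp
  have "\<bar>Gc s v\<bar> = \<bar>v\<bar> * (v^2 - s^2 + 1)" unfolding Gc_def using kv k1 by (simp add: abs_mult)
  also have "\<dots> \<ge> \<bar>v\<bar> * k" using kv by (intro mult_left_mono) auto
  also have "\<bar>v\<bar> * k \<ge> \<bar>v0\<bar> * k^m * k" using \<open>\<bar>v\<bar> \<ge> \<bar>v0\<bar> * k^m\<close> k1 by (intro mult_right_mono) auto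
  finally show ?case unfolding v_def k_def by (simp add: algebra_simps)
qed

lemma escape:
  assumes a: "a > 2" and s2: "s^2 = a + 2" and s: "s > 2" and z: "z \<ge> -a"
    and t: "\<bar>(Gc s ^^ t) (sqrt (z + a))\<bar> > s"
  shows "filterlim (\<lambda>n::nat. \<bar>(f a ^^ n) z\<bar>) at_top sequentially"
proof -
  define v0 where "v0 = (Gc s ^^ t) (sqrt (z + a))"
  define k where "k = v0^2 - s^2 + 1"
  have v0: "\<bar>v0\<bar> > s" using t unfolding v0_def .
  have v0s: "v0^2 > s^2" using v0 s by (simp add: abs_less_iff power2_eq_square) (smt (verit) mult_strict_mono mult_minus_left mult_minus_right)
  then have k1: "k > 1" unfolding k_def by simp
  have low: "\<bar>(f a ^^ (m + t)) z\<bar> \<ge> k^m - a" for m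
  proof -
    have e: "(Gc s ^^ (m + t)) (sqrt (z + a)) = (Gc s ^^ m) v0" unfolding v0_def by (simp add: funpow_add)
    define w where "w = (Gc s ^^ m) v0"
    have w: "\<bar>w\<bar> \<ge> \<bar>v0\<bar> * k^m" unfolding w_def k_def using escape_grow[OF s v0] .
    have "\<bar>v0\<bar> * k^m \<ge> 1 * k^m" using v0 s k1 by (intro mult_right_mono) auto
    moreover have "k^m \<ge> 1" using k1 by simp
    ultimately have w1: "\<bar>w\<bar> \<ge> k^m" "k^m \<ge> 1" using w by linarith+
    have "\<bar>w\<bar> * \<bar>w\<bar> \<ge> \<bar>w\<bar> * 1" using w1 by (intro mult_left_mono) auto
    then have "w^2 \<ge> \<bar>w\<bar>" by (simp add: power2_eq_square)
    moreover have "(f a ^^ (m + t)) z = w^2 - a" using orbit[OF z s2, of "m + t"] e unfolding w_def by simp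
    ultimately show ?thesis using w1 by simp
  qed
  show ?thesis unfolding filterlim_at_top eventually_sequentially
  proof
    fix B :: real
    obtain M where M: "B + a < k^M" using real_arch_pow[OF k1] by blast
    show "\<exists>N. \<forall>n\<ge>N. B \<le> \<bar>(f a ^^ n) z\<bar>"
    proof (intro exI allI impI)
      fix n assume n: "M + t \<le> n"
      define m where "m = n - t"
      have nm: "n = m + t" "M \<le> m" using n unfolding m_def by auto
      have "k^M \<le> k^m" using nm k1 by (intro power_increasing) auto
      then show "B \<le> \<bar>(f a ^^ n) z\<bar>" using low[of m] M nm by simp
    qed
  qed
qed



lemma cos_lip: fixes x y :: real shows "\<bar>cos x - cos y\<bar> \<le> \<bar>x - y\<bar>"
proof -
  have "\<bar>cos x - cos y\<bar> = 2 * \<bar>sin ((x + y) / 2)\<bar> * \<bar>sin ((y - x) / 2)\<bar>"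
    unfolding cos_diff_cos by (simp add: abs_mult)
  also have "\<dots> \<le> 2 * 1 * \<bar>(y - x) / 2\<bar>"
    by (intro mult_mono abs_sin_x_le_abs_x) auto
  finally show ?thesis by simp
qed

lemma Gc_pow_cont: "continuous_on UNIV (Gc s ^^ t)"
proof (induction t)
  case 0 then show ?case by (simp add: continuous_on_id)
next
  case (Suc t)
  have "(Gc s ^^ Suc t) = Gc s \<circ> (Gc s ^^ t)" by simp
  then show ?case using continuous_on_compose[OF Suc G_cont[of "range (Gc s ^^ t)" s]] by simp
qed

lemma null_Z:
  assumes a: "a > 2" and s2: "s^2 = a + 2" and s: "s > 2"
  shows "{z \<in> {-a..2}. \<forall>t. \<bar>(Gc s ^^ t) (sqrt (z + a))\<bar> \<le> s} \<in> null_sets lborel"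
proof -
  define Z where "Z = {z \<in> {-a..2}. \<forall>t. \<bar>(Gc s ^^ t) (sqrt (z + a))\<bar> \<le> s}"
  have Zeq: "Z = {-a..2} \<inter> (\<Inter>t. {z. \<bar>(Gc s ^^ t) (sqrt (z + a))\<bar> \<le> s})" unfolding Z_def by auto
  have "closed Z" unfolding Zeq
  proof (intro closed_Int closed_INT ballI closed_Collect_le)
    fix t
    show "continuous_on UNIV (\<lambda>z. \<bar>(Gc s ^^ t) (sqrt (z + a))\<bar>)"
      by (intro continuous_on_compose2[OF Gc_pow_cont] continuous_intros) auto
  qed (auto intro: continuous_intros)
  then have Zm: "Z \<in> sets lborel" by simp
  define L where "L = Lam s"
  have L3: "L > 3" unfolding L_def using Lam_gt3[OF s] .
  define B where "B n = 3^n * (4 * s * (s * pi / L^n))" for n :: nat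
  have bound: "emeasure lborel Z \<le> ennreal (B n)" for n
  proof -
    obtain F where F0: "finite F \<and> card F \<le> 3^n \<and> U s n \<subseteq> \<Union>F \<and>
      (\<forall>C\<in>F. C \<subseteq> {-s..s} \<and> (\<forall>x\<in>C. \<forall>y\<in>C. \<bar>arccos (x/s) - arccos (y/s)\<bar> \<le> pi / Lam s ^ n))"
      using cover[OF s, of n] by (rule exE)
    have F: "finite F" "card F \<le> 3^n" "U s n \<subseteq> \<Union>F"
      "\<And>C. C\<in>F \<Longrightarrow> C \<subseteq> {-s..s}"
      "\<And>C x y. C\<in>F \<Longrightarrow> x\<in>C \<Longrightarrow> y\<in>C \<Longrightarrow> \<bar>arccos (x/s) - arccos (y/s)\<bar> \<le> pi / L ^ n"
      using F0 unfolding L_def by (simp_all del: atLeastAtMost_iff)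
    define d where "d = s * pi / L^n"
    have d0: "d \<ge> 0" unfolding d_def using s L3 by simp
    define I where "I C = (if C = {} then {} else {(SOME c. c \<in> C)^2 - a - 2 * s * d .. (SOME c. c \<in> C)^2 - a + 2 * s * d})" for C :: "real set"
    have udist: "\<bar>x - y\<bar> \<le> d" if "C \<in> F" "x \<in> C" "y \<in> C" for C x y
    proof -
      have xs: "\<bar>x\<bar> \<le> s" "\<bar>y\<bar> \<le> s" using F(4)[OF that(1)] that by (auto simp: abs_le_iff)
      have cx: "cos (arccos (x/s)) = x/s" "cos (arccos (y/s)) = y/s" using xs s by (auto simp: abs_le_iff field_simps)
      have "\<bar>x - y\<bar> = s * \<bar>cos (arccos (x/s)) - cos (arccos (y/s))\<bar>" unfolding cx using s
        by (simp add: abs_mult[symmetric] field_simps del: abs_mult)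
      also have "\<dots> \<le> s * \<bar>arccos (x/s) - arccos (y/s)\<bar>" using s cos_lip by (intro mult_left_mono) auto
      also have "\<dots> \<le> s * (pi / L^n)" using s F(5)[OF that] by (intro mult_left_mono) auto
      finally show ?thesis unfolding d_def by simp
    qed
    have cov: "Z \<subseteq> (\<Union>C\<in>F. I C)"
    proof
      fix z assume z: "z \<in> Z"
      define u where "u = sqrt (z + a)"
      have zu: "z = u^2 - a" "0 \<le> u" using z unfolding Z_def u_def by auto
      have "u \<in> U s n" using z unfolding Z_def U_def u_def by auto
      then obtain C where C: "C \<in> F" "u \<in> C" using F(3) by blast
      define c where "c = (SOME c. c \<in> C)"
      have c: "c \<in> C" unfolding c_def using C by (metis someI)
      have us: "\<bar>u\<bar> \<le> s" "\<bar>c\<bar> \<le> s" using F(4)[OF C(1)] C c by (auto simp: abs_le_iff)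
      have "\<bar>z - (c^2 - a)\<bar> = \<bar>u - c\<bar> * \<bar>u + c\<bar>" unfolding zu by (simp add: abs_mult[symmetric] power2_eq_square algebra_simps)
      also have "\<dots> \<le> d * (2 * s)" using udist[OF C c] us by (intro mult_mono) auto
      finally have "\<bar>z - (c^2 - a)\<bar> \<le> 2 * s * d" by (simp add: mult_ac)
      then have "z \<in> I C" unfolding I_def c_def[symmetric] using C by (auto simp: abs_le_iff)
      then show "z \<in> (\<Union>C\<in>F. I C)" using C by blast
    qed
    have Im: "I C \<in> sets lborel" for C unfolding I_def by auto
    have Ile: "emeasure lborel (I C) \<le> ennreal (4 * s * d)" for C
    proof (cases "C = {}")
      case True then show ?thesis unfolding I_def by simp
    next
      case False
      have "emeasure lborel (I C) = ennreal (4 * s * d)"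
        unfolding I_def using False s d0 by (simp add: emeasure_lborel_Icc_eq)
      then show ?thesis by simp
    qed
    have "emeasure lborel Z \<le> emeasure lborel (\<Union>C\<in>F. I C)"
      using cov Im F(1) by (intro emeasure_mono) auto
    also have "\<dots> \<le> (\<Sum>C\<in>F. emeasure lborel (I C))"
      using F(1) Im by (intro emeasure_subadditive_finite) auto
    also have "\<dots> \<le> (\<Sum>C\<in>F. ennreal (4 * s * d))" by (intro sum_mono Ile)
    also have "\<dots> = ennreal (real (card F) * (4 * s * d))"
      using s d0 by (simp add: ennreal_of_nat_eq_real_of_nat ennreal_mult)
    also have "\<dots> \<le> ennreal (B n)" unfolding B_def d_def[symmetric]
      using F(2) s d0 by (intro ennreal_leI mult_right_mono) (auto simp: of_nat_le_iff[symmetric])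
    finally show ?thesis .
  qed
  have fin: "emeasure lborel Z \<noteq> \<top>" using bound[of 0] by (auto simp: top_unique)
  have mle: "measure lborel Z \<le> B n" for n
  proof -
    have "B n \<ge> 0" unfolding B_def using s L3 by simp
    then show ?thesis using bound[of n] fin by (simp add: emeasure_eq_ennreal_measure ennreal_le_iff)
  qed
  have lim: "B \<longlonglongrightarrow> 0"
  proof -
    have "B = (\<lambda>n. (4 * s * s * pi) * (3 / L)^n)" unfolding B_def using L3
      by (auto simp: fun_eq_iff power_divide field_simps)
    moreover have "(\<lambda>n. (3 / L)^n) \<longlonglongrightarrow> 0" using L3 by (intro LIMSEQ_power_zero) auto
    ultimately show ?thesis by (simp add: tendsto_mult_right_zero)
  qed
  have "measure lborel Z \<le> 0" using LIMSEQ_le_const[OF lim, of "measure lborel Z"] mle by blast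
  then have "measure lborel Z = 0" by (simp add: antisym)
  then have "emeasure lborel Z = 0" using fin by (simp add: emeasure_eq_ennreal_measure)
  then show ?thesis using Zm unfolding Z_def[symmetric] by (auto intro: null_setsI)
qed



theorem lemma3:
  fixes a :: real
  assumes "a > 2"
  shows "AE z in uniform_measure lborel {-a..2}.
           filterlim (\<lambda>t::nat. \<bar>(f a ^^ t) z\<bar>) at_top sequentially"
proof -
  define s where "s = sqrt (a + 2)"
  have s2: "s^2 = a + 2" using assms by (simp add: s_def)
  have "sqrt 4 < s" unfolding s_def using assms by (simp only: real_sqrt_less_iff)
  then have s: "s > 2" by simp
  show ?thesis
  proof (rule AE_uniform_measureI)
    show "{-a..2} \<in> sets lborel" by simp
    show "AE z in lborel. z \<in> {-a..2} \<longrightarrow> filterlim (\<lambda>t::nat. \<bar>(f a ^^ t) z\<bar>) at_top sequentially"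
    proof (rule AE_I'[OF null_Z[OF assms s2 s]], rule subsetI)
      fix z assume "z \<in> {z \<in> space lborel. \<not> (z \<in> {-a..2} \<longrightarrow> filterlim (\<lambda>t::nat. \<bar>(f a ^^ t) z\<bar>) at_top sequentially)}"
      then have z: "z \<in> {-a..2}" and nf: "\<not> filterlim (\<lambda>t::nat. \<bar>(f a ^^ t) z\<bar>) at_top sequentially" by auto
      have "\<forall>t. \<bar>(Gc s ^^ t) (sqrt (z + a))\<bar> \<le> s"
      proof (rule ccontr)
        assume "\<not> ?thesis"
        then obtain t where "\<bar>(Gc s ^^ t) (sqrt (z + a))\<bar> > s" by (auto simp: not_le)
        then have "filterlim (\<lambda>t::nat. \<bar>(f a ^^ t) z\<bar>) at_top sequentially"
          using escape[OF assms s2 s] z by auto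
        then show False using nf by blast
      qed
      then show "z \<in> {z \<in> {-a..2}. \<forall>t. \<bar>(Gc s ^^ t) (sqrt (z + a))\<bar> \<le> s}" using z by blast
    qed
  qed
qed



end
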